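(* Every finite connected chordal graph can be reduced through a sequence of erasures to a tree.
   Context: All graphs are finite, undirected, simple. A graph is chordal if every induced cycle has length three. A facet edge of $G$ is an edge $xy$ such that $\{x,y\}$ is a maximal clique of $G$. An edge of $G$ is exposed if it is contained in a unique maximal clique of $G$ and it is not a facet edge. For graphs $G,H$ on the same vertex set, $H$ is obtained from $G$ through an erasure if $G$ contains an exposed edge $e$ with $H=G-e$. *)

theory Defs
  imports Main
begin

definition simple_graph :: "'a set \<Rightarrow> 'a set set \<Rightarrow> bool" where
  "simple_graph V E \<longleftrightarrow> finite V \<and>
     (\<forall>e\<in>E. \<exists>x y. x \<noteq> y \<and> x \<in> V \<and> y \<in> V \<and> e = {x, y})"

definition adj :: "'a set set \<Rightarrow> 'a \<Rightarrow> 'a \<Rightarrow> bool" where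
  "adj E x y \<longleftrightarrow> {x, y} \<in> E"

definition connected_graph :: "'a set \<Rightarrow> 'a set set \<Rightarrow> bool" where
  "connected_graph V E \<longleftrightarrow> V \<noteq> {} \<and> (\<forall>u\<in>V. \<forall>v\<in>V. (adj E)\<^sup>*\<^sup>* u v)"

definition is_cycle :: "'a set \<Rightarrow> 'a set set \<Rightarrow> 'a list \<Rightarrow> bool" where
  "is_cycle V E cs \<longleftrightarrow> length cs \<ge> 3 \<and> distinct cs \<and> set cs \<subseteq> V \<and>
     (\<forall>i < length cs. adj E (cs ! i) (cs ! ((i + 1) mod length cs)))"

definition is_induced_cycle :: "'a set \<Rightarrow> 'a set set \<Rightarrow> 'a list \<Rightarrow> bool" where
  "is_induced_cycle V E cs \<longleftrightarrow> is_cycle V E cs \<and>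
     (\<forall>i < length cs. \<forall>j < length cs. adj E (cs ! i) (cs ! j) \<longrightarrow>
        j = (i + 1) mod length cs \<or> i = (j + 1) mod length cs)"

definition chordal :: "'a set \<Rightarrow> 'a set set \<Rightarrow> bool" where
  "chordal V E \<longleftrightarrow> (\<forall>cs. is_induced_cycle V E cs \<longrightarrow> length cs = 3)"

definition acyclic_graph :: "'a set \<Rightarrow> 'a set set \<Rightarrow> bool" where
  "acyclic_graph V E \<longleftrightarrow> \<not> (\<exists>cs. is_cycle V E cs)"

definition is_tree :: "'a set \<Rightarrow> 'a set set \<Rightarrow> bool" where
  "is_tree V E \<longleftrightarrow> connected_graph V E \<and> acyclic_graph V E"

definition is_clique :: "'a set \<Rightarrow> 'a set set \<Rightarrow> 'a set \<Rightarrow> bool" where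
  "is_clique V E C \<longleftrightarrow> C \<subseteq> V \<and> (\<forall>x\<in>C. \<forall>y\<in>C. x \<noteq> y \<longrightarrow> adj E x y)"

definition maximal_clique :: "'a set \<Rightarrow> 'a set set \<Rightarrow> 'a set \<Rightarrow> bool" where
  "maximal_clique V E C \<longleftrightarrow> is_clique V E C \<and>
     (\<forall>D. is_clique V E D \<and> C \<subseteq> D \<longrightarrow> D = C)"

definition facet_edge :: "'a set \<Rightarrow> 'a set set \<Rightarrow> 'a set \<Rightarrow> bool" where
  "facet_edge V E e \<longleftrightarrow> e \<in> E \<and> maximal_clique V E e"

definition exposed_edge :: "'a set \<Rightarrow> 'a set set \<Rightarrow> 'a set \<Rightarrow> bool" where
  "exposed_edge V E e \<longleftrightarrow> e \<in> E \<and>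
     (\<exists>!C. maximal_clique V E C \<and> e \<subseteq> C) \<and> \<not> facet_edge V E e"

definition erasure :: "'a set \<Rightarrow> 'a set set \<Rightarrow> 'a set set \<Rightarrow> bool" where
  "erasure V E E' \<longleftrightarrow> (\<exists>e. exposed_edge V E e \<and> E' = E - {e})"

end

theory Submission
  imports Defs "HOL-Number_Theory.Cong"
begin


lemma adj_sym: "adj E x y = adj E y x"
  by (simp add: adj_def insert_commute)

lemma adj_irrefl: "simple_graph V E \<Longrightarrow> \<not> adj E x x"
  unfolding simple_graph_def adj_def by (metis doubleton_eq_iff)

lemma adj_V: "simple_graph V E \<Longrightarrow> adj E x y \<Longrightarrow> x \<in> V \<and> y \<in> V"
  unfolding simple_graph_def adj_def by (metis doubleton_eq_iff)

fun walk :: "('a \<Rightarrow> 'a \<Rightarrow> bool) \<Rightarrow> 'a list \<Rightarrow> bool" where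
  "walk R [] = True"
| "walk R [x] = True"
| "walk R (x # y # zs) = (R x y \<and> walk R (y # zs))"

lemma walk_nth: "walk R xs \<longleftrightarrow> (\<forall>i. Suc i < length xs \<longrightarrow> R (xs ! i) (xs ! Suc i))"
proof (induction R xs rule: walk.induct)
  case (3 R x y zs)
  show ?case
  proof
    assume "walk R (x # y # zs)"
    then show "\<forall>i. Suc i < length (x # y # zs) \<longrightarrow> R ((x # y # zs) ! i) ((x # y # zs) ! Suc i)"
      using 3 by (auto simp: less_Suc_eq_0_disj)
  next
    assume H: "\<forall>i. Suc i < length (x # y # zs) \<longrightarrow> R ((x # y # zs) ! i) ((x # y # zs) ! Suc i)"
    have "R x y" using H[rule_format, of 0] by simp
    moreover have "walk R (y # zs)" using 3 H by (metis Suc_less_eq length_Cons nth_Cons_Suc)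
    ultimately show "walk R (x # y # zs)" by simp
  qed
qed auto

lemma walk_take: "walk R xs \<Longrightarrow> walk R (take n xs)"
  by (auto simp: walk_nth)

lemma walk_drop: "walk R xs \<Longrightarrow> walk R (drop n xs)"
  by (auto simp: walk_nth)

lemma walk_join: "walk R (as @ [a]) \<Longrightarrow> walk R (b # bs) \<Longrightarrow> R a b \<Longrightarrow> walk R (as @ a # b # bs)"
proof (induction as)
  case (Cons c as)
  then show ?case by (cases as) auto
qed simp

lemma walk_mono: "walk R xs \<Longrightarrow> (\<And>a b. R a b \<Longrightarrow> Q a b) \<Longrightarrow> walk Q xs"
  by (induction R xs rule: walk.induct) auto


definition ipath :: "'a set set \<Rightarrow> 'a list \<Rightarrow> bool" where
  "ipath E p \<longleftrightarrow> distinct p \<and> walk (adj E) p \<and>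
     (\<forall>i<length p. \<forall>j<length p. adj E (p ! i) (p ! j) \<longrightarrow> j = Suc i \<or> i = Suc j)"

lemma ipath_take: "ipath E p \<Longrightarrow> ipath E (take n p)"
  unfolding ipath_def by (auto simp: walk_take)

lemma ipath_drop: "ipath E p \<Longrightarrow> ipath E (drop n p)"
  unfolding ipath_def
proof (intro conjI allI impI)
  fix i j assume H: "distinct p \<and> walk (adj E) p \<and>
     (\<forall>i<length p. \<forall>j<length p. adj E (p ! i) (p ! j) \<longrightarrow> j = Suc i \<or> i = Suc j)"
    and i: "i < length (drop n p)" and j: "j < length (drop n p)" and a: "adj E (drop n p ! i) (drop n p ! j)"
  have "n + j = Suc (n + i) \<or> n + i = Suc (n + j)"
    using H[THEN conjunct2, THEN conjunct2, rule_format, of "n+i" "n+j"] i j a by auto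
  then show "j = Suc i \<or> i = Suc j" by auto
qed (auto simp: walk_drop)

lemma cycle_of_ipath:
  assumes G: "simple_graph V E" and p: "ipath E p" and len: "length p \<ge> 2"
    and x: "x \<notin> set p" "x \<in> V" and pV: "set p \<subseteq> V"
    and a1: "adj E x (p ! 0)" and a2: "adj E x (p ! (length p - 1))"
    and a3: "\<And>k. 0 < k \<Longrightarrow> k < length p - 1 \<Longrightarrow> \<not> adj E x (p ! k)"
  shows "is_induced_cycle V E (x # p)"
proof -
  define n where "n = length p + 1"
  have wk: "\<And>i. Suc i < length p \<Longrightarrow> adj E (p ! i) (p ! Suc i)"
    using p by (auto simp: ipath_def walk_nth)
  have ch: "\<And>i j. i < length p \<Longrightarrow> j < length p \<Longrightarrow> adj E (p ! i) (p ! j) \<Longrightarrow> j = Suc i \<or> i = Suc j"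
    using p by (auto simp: ipath_def)
  have cyc: "is_cycle V E (x # p)"
    unfolding is_cycle_def
  proof (intro conjI allI impI)
    show "3 \<le> length (x # p)" using len by simp
    show "distinct (x # p)" using p x by (auto simp: ipath_def)
    show "set (x # p) \<subseteq> V" using x pV by auto
    fix i assume i: "i < length (x # p)"
    show "adj E ((x # p) ! i) ((x # p) ! ((i + 1) mod length (x # p)))"
    proof (cases "i = 0")
      case True then show ?thesis using a1 len by (cases p) auto
    next
      case False
      then obtain k where k: "i = Suc k" by (cases i) auto
      show ?thesis
      proof (cases "Suc k < length p")
        case True
        then show ?thesis using wk[of k] k by simp
      next
        case False
        then have "k = length p - 1" using i k by simp
        then have "i + 1 = length (x # p)" using k len by simp
        then have "(i + 1) mod length (x # p) = 0" by simp
        then show ?thesis using a2 k i len \<open>k = length p - 1\<close> by (simp add: adj_sym)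
      qed
    qed
  qed
  show ?thesis
    unfolding is_induced_cycle_def
  proof (intro conjI allI impI cyc)
    fix i j assume i: "i < length (x # p)" and j: "j < length (x # p)"
      and a: "adj E ((x # p) ! i) ((x # p) ! j)"
    show "j = (i + 1) mod length (x # p) \<or> i = (j + 1) mod length (x # p)"
    proof (cases i)
      case 0
      then obtain l where l: "j = Suc l" using a adj_irrefl[OF G] by (cases j) auto
      then have "adj E x (p ! l)" using a 0 by simp
      then have "l = 0 \<or> l = length p - 1" using a3[of l] j l by fastforce
      then show ?thesis using 0 l len j by auto
    next
      case (Suc k)
      show ?thesis
      proof (cases j)
        case 0
        then have "adj E x (p ! k)" using a Suc by (simp add: adj_sym)
        then have "k = 0 \<or> k = length p - 1" using a3[of k] i Suc by fastforce
        then show ?thesis using 0 Suc len i by auto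
      next
        case (Suc l)
        then have "l = Suc k \<or> k = Suc l" using ch[of k l] a i j \<open>i = Suc k\<close> by simp
        then show ?thesis using Suc \<open>i = Suc k\<close> i j by auto
      qed
    qed
  qed
qed

lemma mod_cancel_lt:
  fixes a b k n :: nat
  assumes "a < n" "b < n" "(a + k) mod n = (b + k) mod n"
  shows "a = b"
  using assms cong_add_rcancel_nat[of a k b n] by (simp add: cong_def)

lemma cycle_rotate:
  assumes "is_cycle V E cs"
  shows "is_cycle V E (rotate k cs)"
  unfolding is_cycle_def
proof (intro conjI allI impI)
  let ?n = "length cs"
  have c: "?n \<ge> 3" "distinct cs" "set cs \<subseteq> V"
    "\<And>i. i < ?n \<Longrightarrow> adj E (cs ! i) (cs ! ((i + 1) mod ?n))"
    using assms by (auto simp: is_cycle_def)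
  show "3 \<le> length (rotate k cs)" "distinct (rotate k cs)" "set (rotate k cs) \<subseteq> V"
    using c by auto
  have "0 < ?n" using c(1) by linarith
  fix i assume i: "i < length (rotate k cs)"
  have e1: "rotate k cs ! i = cs ! ((i + k) mod ?n)" using i by (simp add: nth_rotate add.commute)
  have e2: "rotate k cs ! ((i + 1) mod length (rotate k cs)) = cs ! (((i+k) mod ?n + 1) mod ?n)"
  proof -
    have "rotate k cs ! ((i + 1) mod length (rotate k cs)) = cs ! (((i+1) mod ?n + k) mod ?n)"
    proof -
      have "0 < ?n" using c(1) by linarith
      then show ?thesis by (subst nth_rotate) (auto simp: add.commute)
    qed
    also have "((i+1) mod ?n + k) mod ?n = ((i+k) mod ?n + 1) mod ?n"
      by (simp add: mod_simps ac_simps)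
    finally show ?thesis .
  qed
  show "adj E (rotate k cs ! i) (rotate k cs ! ((i + 1) mod length (rotate k cs)))"
  proof -
    have m: "(i + k) mod ?n < ?n" using \<open>0 < ?n\<close> by (rule mod_less_divisor)
    show ?thesis using c(4)[OF m] e1 e2 by simp
  qed
qed

lemma induced_cycle_rotate:
  assumes "is_induced_cycle V E cs"
  shows "is_induced_cycle V E (rotate k cs)"
  unfolding is_induced_cycle_def
proof (intro conjI allI impI)
  let ?n = "length cs"
  have cy: "is_cycle V E cs" and ind: "\<And>i j. i < ?n \<Longrightarrow> j < ?n \<Longrightarrow> adj E (cs ! i) (cs ! j) \<Longrightarrow>
        j = (i + 1) mod ?n \<or> i = (j + 1) mod ?n"
    using assms by (auto simp: is_induced_cycle_def)
  have n: "?n \<ge> 3" using cy by (simp add: is_cycle_def)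
  then have pos: "0 < ?n" by linarith
  show "is_cycle V E (rotate k cs)" using cycle_rotate[OF cy] .
  fix i j assume i: "i < length (rotate k cs)" and j: "j < length (rotate k cs)"
    and a: "adj E (rotate k cs ! i) (rotate k cs ! j)"
  have "adj E (cs ! ((i + k) mod ?n)) (cs ! ((j + k) mod ?n))" using a i j by (simp add: nth_rotate add.commute)
  then have "(j + k) mod ?n = ((i + k) mod ?n + 1) mod ?n \<or> (i + k) mod ?n = ((j + k) mod ?n + 1) mod ?n"
    using ind[of "(i+k) mod ?n" "(j+k) mod ?n"] pos by simp
  then have dd: "(j + k) mod ?n = ((i + 1) mod ?n + k) mod ?n \<or> (i + k) mod ?n = ((j + 1) mod ?n + k) mod ?n"
    by (metis add.commute add.left_commute mod_add_left_eq)
  then show "j = (i + 1) mod length (rotate k cs) \<or> i = (j + 1) mod length (rotate k cs)"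
  proof -
    have m1: "(i+1) mod ?n < ?n" "(j+1) mod ?n < ?n" using pos by (auto intro: mod_less_divisor)
    show ?thesis
    using dd i j m1 mod_cancel_lt[of j ?n "(i+1) mod ?n" k] mod_cancel_lt[of i ?n "(j+1) mod ?n" k] by auto
  qed
qed

lemma ipath_of_cycle:
  assumes "is_induced_cycle V E (x # p)"
  shows "ipath E p"
proof -
  let ?n = "length (x # p)"
  have cy: "is_cycle V E (x # p)" and ind: "\<And>i j. i < ?n \<Longrightarrow> j < ?n \<Longrightarrow> adj E ((x#p) ! i) ((x#p) ! j) \<Longrightarrow>
        j = (i + 1) mod ?n \<or> i = (j + 1) mod ?n"
    using assms by (auto simp: is_induced_cycle_def)
  have adjc: "\<And>i. i < ?n \<Longrightarrow> adj E ((x#p) ! i) ((x#p) ! ((i + 1) mod ?n))"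
    using cy by (simp add: is_cycle_def)
  have d: "distinct p" using cy by (simp add: is_cycle_def)
  have w: "walk (adj E) p"
    unfolding walk_nth
  proof (intro allI impI)
    fix i assume "Suc i < length p"
    then show "adj E (p ! i) (p ! Suc i)" using adjc[of "Suc i"] by simp
  qed
  have c: "\<forall>i<length p. \<forall>j<length p. adj E (p ! i) (p ! j) \<longrightarrow> j = Suc i \<or> i = Suc j"
  proof (intro allI impI)
    fix i j assume i: "i < length p" and j: "j < length p" and a: "adj E (p ! i) (p ! j)"
    have "Suc j = (Suc i + 1) mod ?n \<or> Suc i = (Suc j + 1) mod ?n"
      using ind[of "Suc i" "Suc j"] a i j by simp
    then show "j = Suc i \<or> i = Suc j" using i j
      by (auto simp: mod_if split: if_splits)
  qed
  show ?thesis using d w c by (simp add: ipath_def)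
qed



definition cn :: "'a set set \<Rightarrow> 'a \<Rightarrow> 'a \<Rightarrow> 'a set" where
  "cn E x y = {z. adj E x z \<and> adj E y z}"

lemma exposed_of_cn:
  assumes G: "simple_graph V E" and xy: "adj E x y" and ne: "cn E x y \<noteq> {}"
    and cl: "\<And>a b. a \<in> cn E x y \<Longrightarrow> b \<in> cn E x y \<Longrightarrow> a \<noteq> b \<Longrightarrow> adj E a b"
  shows "exposed_edge V E {x, y}"
proof -
  define C0 where "C0 = {x, y} \<union> cn E x y"
  have xyV: "x \<in> V" "y \<in> V" using adj_V[OF G xy] by auto
  have cnV: "cn E x y \<subseteq> V" using adj_V[OF G] by (auto simp: cn_def)
  have xa: "\<And>z. z \<in> C0 \<Longrightarrow> z \<noteq> x \<Longrightarrow> adj E x z" using xy by (auto simp: C0_def cn_def)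
  have ya: "\<And>z. z \<in> C0 \<Longrightarrow> z \<noteq> y \<Longrightarrow> adj E y z" using xy by (auto simp: C0_def cn_def adj_sym)
  have clq: "is_clique V E C0"
    unfolding is_clique_def
  proof (intro conjI ballI impI)
    show "C0 \<subseteq> V" using xyV cnV by (auto simp: C0_def)
    fix a b assume a: "a \<in> C0" and b: "b \<in> C0" and ab: "a \<noteq> b"
    show "adj E a b"
    proof (cases "a = x \<or> a = y \<or> b = x \<or> b = y")
      case True
      then show ?thesis using xa ya a b ab adj_sym by metis
    next
      case False
      then have "a \<in> cn E x y" "b \<in> cn E x y" using a b by (auto simp: C0_def)
      then show ?thesis using cl ab by blast
    qed
  qed
  have sub: "\<And>D. is_clique V E D \<Longrightarrow> {x, y} \<subseteq> D \<Longrightarrow> D \<subseteq> C0"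
  proof
    fix D z assume D: "is_clique V E D" "{x, y} \<subseteq> D" and z: "z \<in> D"
    show "z \<in> C0"
    proof (cases "z = x \<or> z = y")
      case True then show ?thesis by (auto simp: C0_def)
    next
      case False
      then have "adj E x z" "adj E y z" using D z unfolding is_clique_def by auto
      then show ?thesis by (auto simp: C0_def cn_def)
    qed
  qed
  have mC0: "maximal_clique V E C0"
    unfolding maximal_clique_def using clq sub by (auto simp: C0_def)
  have uniq: "\<exists>!C. maximal_clique V E C \<and> {x, y} \<subseteq> C"
  proof
    show "maximal_clique V E C0 \<and> {x, y} \<subseteq> C0" using mC0 by (auto simp: C0_def)
    fix C assume C: "maximal_clique V E C \<and> {x, y} \<subseteq> C"
    then have "C \<subseteq> C0" using sub by (auto simp: maximal_clique_def)
    then show "C = C0" using C clq by (auto simp: maximal_clique_def)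
  qed
  obtain z where z: "z \<in> cn E x y" using ne by auto
  have zxy: "z \<noteq> x" "z \<noteq> y" using z adj_irrefl[OF G] by (auto simp: cn_def)
  have nf: "\<not> facet_edge V E {x, y}"
  proof
    assume "facet_edge V E {x, y}"
    then have "maximal_clique V E {x, y}" by (simp add: facet_edge_def)
    then have "C0 = {x, y}" using clq by (auto simp: maximal_clique_def C0_def)
    then show False using z zxy by (auto simp: C0_def)
  qed
  have "{x, y} \<in> E" using xy by (simp add: adj_def)
  then show ?thesis using uniq nf by (simp add: exposed_edge_def)
qed

lemma finite_max_card:
  fixes f :: "'b \<Rightarrow> nat"
  assumes "finite F" "X \<in> F"
  shows "\<exists>C\<in>F. \<forall>C'\<in>F. f C' \<le> f C"
proof -
  have "Max (f ` F) \<in> f ` F" using assms by (intro Max_in) auto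
  then obtain C where "C \<in> F" "f C = Max (f ` F)" by auto
  then show ?thesis using assms by (metis Max_ge finite_imageI image_eqI)
qed

lemma max_clique_ext:
  assumes G: "simple_graph V E" and D: "is_clique V E D"
  shows "\<exists>C. maximal_clique V E C \<and> D \<subseteq> C"
proof -
  have fin: "finite V" using G by (simp add: simple_graph_def)
  let ?F = "{C. is_clique V E C \<and> D \<subseteq> C}"
  have fF: "finite ?F" using fin by (rule finite_subset[rotated, OF finite_Pow_iff[THEN iffD2]]) (auto simp: is_clique_def)
  have "D \<in> ?F" using D by simp
  then obtain C where C: "C \<in> ?F" and mx: "\<And>C'. C' \<in> ?F \<Longrightarrow> card C' \<le> card C"
    using finite_max_card[OF fF \<open>D \<in> ?F\<close>, of card] by blast
  have "maximal_clique V E C"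
    unfolding maximal_clique_def
  proof (intro conjI allI impI)
    show "is_clique V E C" using C by simp
    fix D' assume H: "is_clique V E D' \<and> C \<subseteq> D'"
    then have "D' \<in> ?F" using C by auto
    then have "card D' \<le> card C" by (rule mx)
    moreover have "finite D'" using H fin by (auto simp: is_clique_def intro: finite_subset)
    ultimately show "D' = C" using H by (metis card_seteq)
  qed
  then show ?thesis using C by auto
qed

lemma cn_of_exposed:
  assumes G: "simple_graph V E" and ex: "exposed_edge V E e"
  obtains x y where "e = {x, y}" "adj E x y" "x \<noteq> y" "cn E x y \<noteq> {}"
    "\<And>a b. a \<in> cn E x y \<Longrightarrow> b \<in> cn E x y \<Longrightarrow> a \<noteq> b \<Longrightarrow> adj E a b"
proof -
  have eE: "e \<in> E" using ex by (simp add: exposed_edge_def)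
  then obtain x y where xy: "x \<noteq> y" "x \<in> V" "y \<in> V" "e = {x, y}"
    using G by (auto simp: simple_graph_def)
  have a: "adj E x y" using eE xy by (simp add: adj_def)
  have u: "\<exists>!C. maximal_clique V E C \<and> e \<subseteq> C" and nf: "\<not> facet_edge V E e"
    using ex by (auto simp: exposed_edge_def)
  then obtain C where C: "maximal_clique V E C" "e \<subseteq> C" by auto
  have eclq: "is_clique V E e" using xy a by (auto simp: is_clique_def adj_sym)
  have "C \<noteq> e" using C nf eE by (auto simp: facet_edge_def)
  then obtain z where z: "z \<in> C" "z \<notin> e" using C by auto
  have "adj E x z" "adj E y z" using C z xy unfolding maximal_clique_def is_clique_def by auto
  then have ne: "cn E x y \<noteq> {}" by (auto simp: cn_def)
  have cl: "adj E a b" if ab: "a \<in> cn E x y" "b \<in> cn E x y" "a \<noteq> b" for a b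
  proof -
    have aV: "a \<in> V" and bV: "b \<in> V" using ab adj_V[OF G] by (auto simp: cn_def)
    have axy: "a \<noteq> x" "a \<noteq> y" "b \<noteq> x" "b \<noteq> y" using ab adj_irrefl[OF G] by (auto simp: cn_def)
    have "is_clique V E {x, y, a}" using ab a xy aV by (auto simp: is_clique_def cn_def adj_sym)
    then obtain C1 where C1: "maximal_clique V E C1" "{x, y, a} \<subseteq> C1" using max_clique_ext[OF G] by blast
    have "is_clique V E {x, y, b}" using ab a xy bV by (auto simp: is_clique_def cn_def adj_sym)
    then obtain C2 where C2: "maximal_clique V E C2" "{x, y, b} \<subseteq> C2" using max_clique_ext[OF G] by blast
    have "C1 = C2" using u C1 C2 xy by auto
    then show ?thesis using C1 C2 ab(3) by (auto simp: maximal_clique_def is_clique_def)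
  qed
  show ?thesis using that xy a ne cl by blast
qed



lemma rtranclp_walk:
  assumes "R\<^sup>*\<^sup>* a b"
  shows "\<exists>xs. walk R xs \<and> xs \<noteq> [] \<and> hd xs = a \<and> last xs = b \<and> set xs \<subseteq> {z. R\<^sup>*\<^sup>* a z}"
  using assms
proof (induction rule: converse_rtranclp_induct)
  case base
  then show ?case by (intro exI[of _ "[b]"]) auto
next
  case (step a c)
  then obtain xs where xs: "walk R xs" "xs \<noteq> []" "hd xs = c" "last xs = b" "set xs \<subseteq> {z. R\<^sup>*\<^sup>* c z}"
    by auto
  then obtain t where t: "xs = c # t" by (cases xs) auto
  have "walk R (a # xs)" using xs t step by simp
  moreover have "set (a # xs) \<subseteq> {z. R\<^sup>*\<^sup>* a z}" using xs step
    by (auto intro: converse_rtranclp_into_rtranclp)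
  ultimately show ?case using xs t by (intro exI[of _ "a # xs"]) auto
qed

lemma min_walk_ipath:
  assumes G: "simple_graph V E"
    and P: "walk (adj E) xs" "xs \<noteq> []" "hd xs = s" "last xs = t" "set xs \<subseteq> B"
    and mn: "\<And>ys. walk (adj E) ys \<Longrightarrow> ys \<noteq> [] \<Longrightarrow> hd ys = s \<Longrightarrow> last ys = t \<Longrightarrow> set ys \<subseteq> B
               \<Longrightarrow> length xs \<le> length ys"
  shows "ipath E xs"
proof -
  let ?n = "length xs"
  have wn: "\<And>i. Suc i < ?n \<Longrightarrow> adj E (xs ! i) (xs ! Suc i)" using P(1) by (simp add: walk_nth)
  have hd0: "xs ! 0 = s" using P by (simp add: hd_conv_nth)
  have lst: "xs ! (?n - 1) = t" using P by (simp add: last_conv_nth)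
  have tk: "\<And>i. i < ?n \<Longrightarrow> take (Suc i) xs = take i xs @ [xs ! i]" by (simp add: take_Suc_conv_app_nth)
  have dr: "\<And>j. j < ?n \<Longrightarrow> drop j xs = xs ! j # drop (Suc j) xs" by (simp add: Cons_nth_drop_Suc)
  have short: False if ij: "i < j" "j < ?n" "Suc i < j \<or> xs ! i = xs ! j"
     and a: "xs ! i = xs ! j \<or> adj E (xs ! i) (xs ! j)" for i j
  proof -
    define ys where "ys = (if xs ! i = xs ! j then take (Suc i) xs @ drop (Suc j) xs
                           else take (Suc i) xs @ drop j xs)"
    have ne: "ys \<noteq> []" using ij by (auto simp: ys_def)
    have hy: "hd ys = s" using P(2,3) by (cases xs) (auto simp: ys_def)
    have sy: "set ys \<subseteq> B"
      using P(5) set_take_subset[of "Suc i" xs] set_drop_subset[of j xs] set_drop_subset[of "Suc j" xs]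
      unfolding ys_def by auto
    have ly: "length ys < ?n" using ij by (auto simp: ys_def)
    have wy: "walk (adj E) ys \<and> last ys = t"
    proof (cases "xs ! i = xs ! j")
      case True
      show ?thesis
      proof (cases "Suc j = ?n")
        case True
        then have "ys = take (Suc i) xs" using \<open>xs ! i = xs ! j\<close> by (simp add: ys_def)
        moreover have "last (take (Suc i) xs) = xs ! i" using ij by (simp add: tk)
        moreover have "j = ?n - 1" using True by simp
        ultimately show ?thesis using P(1) walk_take \<open>xs ! i = xs ! j\<close> lst by auto
      next
        case False
        then have sj: "Suc j < ?n" using ij by simp
        have "ys = take i xs @ xs ! i # xs ! Suc j # drop (Suc (Suc j)) xs"
          using \<open>xs ! i = xs ! j\<close> tk[of i] dr[of "Suc j"] ij sj by (simp add: ys_def)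
        moreover have "walk (adj E) (take i xs @ [xs ! i])" using tk[of i] ij walk_take[OF P(1), of "Suc i"] by simp
        moreover have "walk (adj E) (xs ! Suc j # drop (Suc (Suc j)) xs)"
          using walk_drop[OF P(1), of "Suc j"] dr[OF sj] by simp
        moreover have "adj E (xs ! i) (xs ! Suc j)" using wn[OF sj] \<open>xs ! i = xs ! j\<close> by simp
        moreover have "last ys = t" using sj P by (auto simp: ys_def)
        ultimately show ?thesis using walk_join by metis
      qed
    next
      case False
      then have aa: "adj E (xs ! i) (xs ! j)" using a by simp
      have "ys = take i xs @ xs ! i # xs ! j # drop (Suc j) xs"
        using False tk[of i] dr[of j] ij by (simp add: ys_def)
      moreover have "walk (adj E) (take i xs @ [xs ! i])" using tk[of i] ij walk_take[OF P(1), of "Suc i"] by simp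
      moreover have "walk (adj E) (xs ! j # drop (Suc j) xs)"
        using walk_drop[OF P(1), of j] dr ij by simp
      moreover have "last ys = t" using ij P False by (auto simp: ys_def)
      ultimately show ?thesis using walk_join aa by metis
    qed
    have "length xs \<le> length ys" using mn[of ys] wy ne hy sy by blast
    then show False using ly by simp
  qed
  have d: "distinct xs"
  proof (rule ccontr)
    assume "\<not> distinct xs"
    then obtain i j where "i < ?n" "j < ?n" "i \<noteq> j" "xs ! i = xs ! j" by (auto simp: distinct_conv_nth)
    then show False using short[of i j] short[of j i] by (cases "i < j") auto
  qed
  have c: "\<forall>i<?n. \<forall>j<?n. adj E (xs ! i) (xs ! j) \<longrightarrow> j = Suc i \<or> i = Suc j"
  proof (intro allI impI)
    fix i j assume i: "i < ?n" and j: "j < ?n" and a: "adj E (xs ! i) (xs ! j)"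
    have "i \<noteq> j" using a adj_irrefl[OF G] by auto
    show "j = Suc i \<or> i = Suc j"
    proof (rule ccontr)
      assume "\<not> (j = Suc i \<or> i = Suc j)"
      then show False using short[of i j] short[of j i] a i j \<open>i \<noteq> j\<close> adj_sym
        by (cases "i < j") (auto simp: adj_sym)
    qed
  qed
  show ?thesis using d c P(1) by (simp add: ipath_def)
qed



definition simplicial :: "'a set set \<Rightarrow> 'a \<Rightarrow> bool" where
  "simplicial E s \<longleftrightarrow> (\<forall>c d. adj E s c \<longrightarrow> adj E s d \<longrightarrow> c \<noteq> d \<longrightarrow> adj E c d)"

definition restr :: "'a set set \<Rightarrow> 'a set \<Rightarrow> 'a set set" where
  "restr E W = {e \<in> E. e \<subseteq> W}"

lemma adj_restr: "adj (restr E W) a b \<longleftrightarrow> adj E a b \<and> a \<in> W \<and> b \<in> W"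
  by (auto simp: adj_def restr_def)

lemma simple_restr:
  assumes "simple_graph V E" "W \<subseteq> V" shows "simple_graph W (restr E W)"
  unfolding simple_graph_def
proof (intro conjI ballI)
  show "finite W" using assms by (auto simp: simple_graph_def intro: finite_subset)
  fix e assume "e \<in> restr E W"
  then have e: "e \<in> E" "e \<subseteq> W" by (auto simp: restr_def)
  then obtain x y where "x \<noteq> y" "e = {x, y}" using assms(1) unfolding simple_graph_def by blast
  then show "\<exists>x y. x \<noteq> y \<and> x \<in> W \<and> y \<in> W \<and> e = {x, y}" using e by blast
qed

lemma chordal_restr:
  assumes "chordal V E" "W \<subseteq> V"
  shows "chordal W (restr E W)"
  unfolding chordal_def
proof (intro allI impI)
  fix cs assume H: "is_induced_cycle W (restr E W) cs"
  then have sW: "set cs \<subseteq> W" by (simp add: is_induced_cycle_def is_cycle_def)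
  have inW: "\<And>i. i < length cs \<Longrightarrow> cs ! i \<in> W" using sW by (meson nth_mem subsetD)
  have "is_induced_cycle V E cs"
    unfolding is_induced_cycle_def is_cycle_def
  proof (intro conjI allI impI)
    show "3 \<le> length cs" "distinct cs" using H by (auto simp: is_induced_cycle_def is_cycle_def)
    show "set cs \<subseteq> V" using sW assms(2) by blast
    fix i assume "i < length cs"
    then show "adj E (cs ! i) (cs ! ((i + 1) mod length cs))"
      using H unfolding is_induced_cycle_def is_cycle_def adj_restr by blast
  next
    fix i j assume ij: "i < length cs" "j < length cs" and a: "adj E (cs ! i) (cs ! j)"
    then have "adj (restr E W) (cs ! i) (cs ! j)" using inW by (simp add: adj_restr)
    then show "j = (i + 1) mod length cs \<or> i = (j + 1) mod length cs"
      using H ij unfolding is_induced_cycle_def by blast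
  qed
  then show "length cs = 3" using assms(1) by (simp add: chordal_def)
qed

lemma sep_clique:
  assumes G: "simple_graph V E" and ch: "chordal V E" and v: "v \<in> V"
    and A: "A \<subseteq> V" "\<And>a. a \<in> A \<Longrightarrow> a \<noteq> v \<and> \<not> adj E v a"
    and st: "s \<in> V" "t \<in> V" "s \<noteq> t" "s \<notin> A" "t \<notin> A" "adj E v s" "adj E v t"
    and a12: "adj E s a1" "adj E t a2"
    and w: "walk (adj E) w" "w \<noteq> []" "hd w = a1" "last w = a2" "set w \<subseteq> A"
  shows "adj E s t"
proof (rule ccontr)
  assume nst: "\<not> adj E s t"
  define B where "B = A \<union> {s, t}"
  let ?P = "\<lambda>ys. walk (adj E) ys \<and> ys \<noteq> [] \<and> hd ys = s \<and> last ys = t \<and> set ys \<subseteq> B"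
  obtain w' where w': "w = a1 # w'" using w by (cases w) auto
  have "walk (adj E) (w @ [t])"
  proof -
    have "w = butlast w @ [a2]" using w by (metis append_butlast_last_id)
    moreover have "adj E a2 t" using a12 by (simp add: adj_sym)
    ultimately have "walk (adj E) (butlast w @ a2 # t # [])"
      using walk_join[of "adj E" "butlast w" a2 t "[]"] w(1) by simp
    then show ?thesis using \<open>w = butlast w @ [a2]\<close> by (metis append.assoc append_Cons append_Nil)
  qed
  then have "?P (s # w @ [t])" using w w' a12 by (auto simp: B_def)
  then obtain xs where xs: "?P xs" and mn: "\<And>ys. ?P ys \<Longrightarrow> length xs \<le> length ys"
    using ex_has_least_nat[of ?P _ length] by metis
  have ip: "ipath E xs" using min_walk_ipath[OF G, of xs s t B] xs mn by blast
  let ?n = "length xs"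
  have hd0: "xs ! 0 = s" using xs by (metis hd_conv_nth)
  have lst: "xs ! (?n - 1) = t" using xs by (metis last_conv_nth)
  have n3: "?n \<ge> 3"
  proof (rule ccontr)
    assume "\<not> ?n \<ge> 3"
    moreover have "?n \<noteq> 0" using xs by simp
    ultimately have "?n = 1 \<or> ?n = 2" by linarith
    then show False
    proof
      assume 1: "?n = 1" then show False using hd0 lst st by simp
    next
      assume 2: "?n = 2"
      have "walk (adj E) xs" using xs by blast
      then have "adj E (xs ! 0) (xs ! Suc 0)" using 2 by (simp add: walk_nth)
      then show False using hd0 lst 2 nst by simp
    qed
  qed
  have vB: "v \<notin> set xs"
  proof
    assume "v \<in> set xs"
    then have "v \<in> B" using xs by blast
    then show False using A(2)[of v] st(6,7) adj_irrefl[OF G, of v] unfolding B_def by blast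
  qed
  have xsV: "set xs \<subseteq> V" using xs A(1) st(1,2) unfolding B_def by blast
  have int: "\<not> adj E v (xs ! k)" if k: "0 < k" "k < ?n - 1" for k
  proof -
    have d: "distinct xs" using ip by (simp add: ipath_def)
    have kn: "k < ?n" "0 < ?n" "?n - 1 < ?n" using k n3 by auto
    have "xs ! k \<noteq> xs ! 0" using nth_eq_iff_index_eq[OF d kn(1) kn(2)] k by auto
    moreover have "xs ! k \<noteq> xs ! (?n - 1)" using nth_eq_iff_index_eq[OF d kn(1) kn(3)] k by auto
    ultimately have "xs ! k \<noteq> s" "xs ! k \<noteq> t" using hd0 lst by auto
    moreover have "xs ! k \<in> B" using xs kn by auto
    ultimately show ?thesis using A by (auto simp: B_def)
  qed
  have "is_induced_cycle V E (v # xs)"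
    using cycle_of_ipath[OF G ip _ vB v xsV] n3 hd0 lst st int by simp
  then have "length (v # xs) = 3" using ch unfolding chordal_def by blast
  then show False using n3 by simp
qed



lemma rtranclp_sym:
  assumes "\<And>x y. R x y \<Longrightarrow> R y x" "R\<^sup>*\<^sup>* a b"
  shows "R\<^sup>*\<^sup>* b a"
  using assms(2)
proof (induction rule: rtranclp_induct)
  case (step y z)
  then show ?case using assms(1) by (meson converse_rtranclp_into_rtranclp)
qed simp

lemma dirac_aux:
  assumes "simple_graph V E" "chordal V E" "v \<in> V" "a0 \<in> V" "a0 \<noteq> v" "\<not> adj E v a0"
  shows "\<exists>s\<in>V. s \<noteq> v \<and> \<not> adj E v s \<and> simplicial E s"
  using assms
proof (induction "card V" arbitrary: V E v a0 rule: less_induct)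
  case less
  note G = less.prems(1) and ch = less.prems(2) and v = less.prems(3)
    and a0 = less.prems(4-6)
  have finV: "finite V" using G by (simp add: simple_graph_def)
  define Vr where "Vr = {a \<in> V. a \<noteq> v \<and> \<not> adj E v a}"
  define R where "R = (\<lambda>x y. adj E x y \<and> x \<in> Vr \<and> y \<in> Vr)"
  define A where "A = {a. R\<^sup>*\<^sup>* a0 a}"
  define S where "S = {s \<in> V. s \<notin> A \<and> (\<exists>a\<in>A. adj E s a)}"
  define W where "W = A \<union> S"
  define E' where "E' = restr E W"
  have Rsym: "\<And>x y. R x y \<Longrightarrow> R y x" by (auto simp: R_def adj_sym)
  have a0A: "a0 \<in> A" by (simp add: A_def)
  have a0Vr: "a0 \<in> Vr" using a0 by (simp add: Vr_def)
  have AVr: "A \<subseteq> Vr"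
  proof
    fix a assume "a \<in> A"
    then have "R\<^sup>*\<^sup>* a0 a" by (simp add: A_def)
    then show "a \<in> Vr" using a0Vr by (cases rule: rtranclp.cases) (auto simp: R_def)
  qed
  have AV: "A \<subseteq> V" using AVr by (auto simp: Vr_def)
  have F1: "b \<in> W" if "a \<in> A" "adj E a b" for a b
  proof -
    have "b \<in> V" using adj_V[OF G that(2)] by simp
    then show ?thesis using that by (auto simp: W_def S_def adj_sym)
  qed
  have F2: "adj E v s" if sS: "s \<in> S" for s
  proof -
    obtain a where a: "a \<in> A" "adj E s a" "s \<in> V" "s \<notin> A" using sS by (auto simp: S_def)
    have aVr: "a \<in> Vr" using a AVr by auto
    have "s \<noteq> v" using a aVr by (auto simp: Vr_def adj_sym)
    show ?thesis
    proof (rule ccontr)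
      assume "\<not> adj E v s"
      then have "s \<in> Vr" using a \<open>s \<noteq> v\<close> by (simp add: Vr_def)
      then have "R a s" using a aVr by (simp add: R_def adj_sym)
      then have "s \<in> A" using a(1) by (auto simp: A_def intro: rtranclp.rtrancl_into_rtrancl)
      then show False using a by simp
    qed
  qed
  have Aprop: "\<And>a. a \<in> A \<Longrightarrow> a \<noteq> v \<and> \<not> adj E v a" using AVr by (auto simp: Vr_def)
  have F3: "adj E s t" if st: "s \<in> S" "t \<in> S" "s \<noteq> t" for s t
  proof -
    obtain a1 where a1: "a1 \<in> A" "adj E s a1" using st by (auto simp: S_def)
    obtain a2 where a2: "a2 \<in> A" "adj E t a2" using st by (auto simp: S_def)
    have "R\<^sup>*\<^sup>* a1 a0" using a1 rtranclp_sym[OF Rsym] by (auto simp: A_def)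
    moreover have "R\<^sup>*\<^sup>* a0 a2" using a2 by (simp add: A_def)
    ultimately have "R\<^sup>*\<^sup>* a1 a2" by simp
    then obtain w where w: "walk R w" "w \<noteq> []" "hd w = a1" "last w = a2" "set w \<subseteq> {z. R\<^sup>*\<^sup>* a1 z}"
      using rtranclp_walk by metis
    have wA: "set w \<subseteq> A"
    proof
      fix z assume "z \<in> set w"
      then have "R\<^sup>*\<^sup>* a1 z" using w by auto
      moreover have "R\<^sup>*\<^sup>* a0 a1" using a1 by (simp add: A_def)
      ultimately show "z \<in> A" by (simp add: A_def)
    qed
    have wE: "walk (adj E) w" using walk_mono[OF w(1)] by (auto simp: R_def)
    have sV: "s \<in> V" "t \<in> V" "s \<notin> A" "t \<notin> A" using st by (auto simp: S_def)
    show ?thesis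
      using sep_clique[OF G ch v AV Aprop sV(1,2) st(3) sV(3,4) F2[OF st(1)] F2[OF st(2)] a1(2) a2(2) wE w(2-4) wA] .
  qed
  have WV: "W \<subseteq> V" using AV by (auto simp: W_def S_def)
  have vW: "v \<notin> W" using Aprop F2 adj_irrefl[OF G] by (auto simp: W_def)
  have cW: "card W < card V" using WV vW v finV by (metis psubsetI psubset_card_mono)
  have G': "simple_graph W E'" unfolding E'_def using simple_restr[OF G WV] .
  have ch': "chordal W E'" unfolding E'_def using chordal_restr[OF ch WV] .
  have lift: "simplicial E s" if s: "s \<in> A" "simplicial E' s" for s
    unfolding simplicial_def
  proof (intro allI impI)
    fix c d assume "adj E s c" "adj E s d" "c \<noteq> d"
    moreover have "c \<in> W" "d \<in> W" "s \<in> W" using F1 s \<open>adj E s c\<close> \<open>adj E s d\<close> by (auto simp: W_def)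
    ultimately have "adj E' c d" using s(2) by (auto simp: simplicial_def E'_def adj_restr)
    then show "adj E c d" by (simp add: E'_def adj_restr)
  qed
  have good: "s \<in> V \<and> s \<noteq> v \<and> \<not> adj E v s" if "s \<in> A" for s
    using that AV Aprop by auto
  show ?case
  proof (cases "\<exists>w\<in>W. \<exists>b\<in>W. b \<noteq> w \<and> \<not> adj E' w b")
    case True
    then obtain w b where wb: "w \<in> W" "b \<in> W" "b \<noteq> w" "\<not> adj E' w b" by blast
    obtain s1 where s1: "s1 \<in> W" "s1 \<noteq> w" "\<not> adj E' w s1" "simplicial E' s1"
      using less.hyps[OF cW G' ch' wb(1) wb(2) wb(3) wb(4)] by blast
    have "\<not> adj E' s1 w" using s1 by (simp add: adj_sym)
    then obtain s2 where s2: "s2 \<in> W" "s2 \<noteq> s1" "\<not> adj E' s1 s2" "simplicial E' s2"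
      using less.hyps[OF cW G' ch' s1(1) wb(1) s1(2)[symmetric]] by blast
    have "s1 \<in> A \<or> s2 \<in> A"
    proof (rule ccontr)
      assume "\<not> (s1 \<in> A \<or> s2 \<in> A)"
      then have "s1 \<in> S" "s2 \<in> S" using s1 s2 by (auto simp: W_def)
      then have "adj E s1 s2" using F3 s2(2) by metis
      then have "adj E' s1 s2" using s1 s2 by (simp add: E'_def adj_restr)
      then show False using s2 by simp
    qed
    then obtain s where "s \<in> A" "simplicial E' s" using s1(4) s2(4) by blast
    then have "simplicial E s" "s \<in> V \<and> s \<noteq> v \<and> \<not> adj E v s" using lift good by auto
    then show ?thesis by blast
  next
    case False
    have "simplicial E a0"
      unfolding simplicial_def
    proof (intro allI impI)
      fix c d assume "adj E a0 c" "adj E a0 d" "c \<noteq> d"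
      moreover have "c \<in> W" "d \<in> W" using F1 a0A \<open>adj E a0 c\<close> \<open>adj E a0 d\<close> by auto
      moreover have all: "\<forall>w\<in>W. \<forall>b\<in>W. b \<noteq> w \<longrightarrow> adj E' w b" using False by blast
      ultimately show "adj E c d" using all[rule_format, of c d] by (simp add: E'_def adj_restr)
    qed
    moreover have "a0 \<in> V \<and> a0 \<noteq> v \<and> \<not> adj E v a0" using good a0A by blast
    ultimately show ?thesis by blast
  qed
qed

lemma dirac:
  assumes G: "simple_graph V E" and ch: "chordal V E" and ne: "V \<noteq> {}"
  shows "\<exists>s\<in>V. simplicial E s"
proof (cases "\<exists>v\<in>V. \<exists>a\<in>V. a \<noteq> v \<and> \<not> adj E v a")
  case True
  then obtain v a where "v \<in> V" "a \<in> V" "a \<noteq> v" "\<not> adj E v a" by blast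
  then show ?thesis using dirac_aux[OF G ch] by blast
next
  case False
  obtain v where v: "v \<in> V" using ne by blast
  have "simplicial E v"
    unfolding simplicial_def
  proof (intro allI impI)
    fix c d assume "adj E v c" "adj E v d" "c \<noteq> d"
    then show "adj E c d" using False adj_V[OF G] by metis
  qed
  then show ?thesis using v by blast
qed



lemma adj_minus: "adj (E - {{x, y}}) a b \<longleftrightarrow> adj E a b \<and> {a, b} \<noteq> {x, y}"
  by (auto simp: adj_def)

lemma simple_minus: "simple_graph V E \<Longrightarrow> simple_graph V (E - {e})"
  by (auto simp: simple_graph_def)

lemma remove_connected:
  assumes G: "simple_graph V E" and c: "connected_graph V E" and ex: "exposed_edge V E e"
  shows "connected_graph V (E - {e})"
proof -
  obtain x y where xy: "e = {x, y}" "adj E x y" "x \<noteq> y" "cn E x y \<noteq> {}"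
    using cn_of_exposed[OF G ex] by metis
  obtain z where z: "adj E x z" "adj E y z" using xy by (auto simp: cn_def)
  have zxy: "z \<noteq> x" "z \<noteq> y" using z adj_irrefl[OF G] by auto
  have xz: "adj (E - {e}) x z" "adj (E - {e}) z y"
    using z zxy xy by (auto simp: adj_minus adj_sym doubleton_eq_iff)
  have step: "(adj (E - {e}))\<^sup>*\<^sup>* a b" if "adj E a b" for a b
  proof (cases "{a, b} = {x, y}")
    case True
    have xy2: "(adj (E - {e}))\<^sup>*\<^sup>* x y" using xz by auto
    have yx2: "(adj (E - {e}))\<^sup>*\<^sup>* y x" using xz adj_sym[of "E - {e}"] by (meson converse_rtranclp_into_rtranclp r_into_rtranclp)
    show ?thesis using True xy2 yx2 by (auto simp: doubleton_eq_iff)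
  next
    case False
    then have "adj (E - {e}) a b" using that xy by (simp add: adj_minus)
    then show ?thesis by auto
  qed
  have "(adj (E - {e}))\<^sup>*\<^sup>* a b" if "(adj E)\<^sup>*\<^sup>* a b" for a b
    using that
  proof (induction rule: rtranclp_induct)
    case (step b c)
    then show ?case using \<open>\<And>a b. adj E a b \<Longrightarrow> (adj (E - {e}))\<^sup>*\<^sup>* a b\<close>[of b c] by auto
  qed simp
  then show ?thesis using c by (auto simp: connected_graph_def)
qed

lemma ipath_lift:
  assumes "ipath (E - {{x, y}}) q" "x \<notin> set q"
  shows "ipath E q"
proof -
  have w: "walk (adj E) q" using assms(1) walk_mono[of "adj (E - {{x, y}})" q "adj E"]
    by (auto simp: ipath_def adj_minus)
  have "\<forall>i<length q. \<forall>j<length q. adj E (q ! i) (q ! j) \<longrightarrow> j = Suc i \<or> i = Suc j"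
  proof (intro allI impI)
    fix i j assume i: "i < length q" and j: "j < length q" and a: "adj E (q ! i) (q ! j)"
    have "q ! i \<noteq> x" "q ! j \<noteq> x" using assms(2) i j nth_mem by metis+
    then have "{q ! i, q ! j} \<noteq> {x, y}" by (auto simp: doubleton_eq_iff)
    then have "adj (E - {{x, y}}) (q ! i) (q ! j)" using a by (simp add: adj_minus)
    then show "j = Suc i \<or> i = Suc j" using assms(1) i j by (auto simp: ipath_def)
  qed
  then show ?thesis using assms w by (auto simp: ipath_def)
qed



lemma remove_chordal:
  assumes G: "simple_graph V E" and ch: "chordal V E" and ex: "exposed_edge V E e"
  shows "chordal V (E - {e})"
proof -
  obtain x y where xy: "e = {x, y}" "adj E x y" "x \<noteq> y"
    and cl: "\<And>a b. a \<in> cn E x y \<Longrightarrow> b \<in> cn E x y \<Longrightarrow> a \<noteq> b \<Longrightarrow> adj E a b"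
    using cn_of_exposed[OF G ex] by metis
  let ?E' = "E - {{x, y}}"
  have xyV: "x \<in> V" "y \<in> V" using adj_V[OF G xy(2)] by auto
  show ?thesis
    unfolding chordal_def xy(1)
  proof (intro allI impI)
    fix cs assume H: "is_induced_cycle V ?E' cs"
    let ?n = "length cs"
    have n3: "?n \<ge> 3" and csV: "set cs \<subseteq> V" and dcs: "distinct cs"
      using H by (auto simp: is_induced_cycle_def is_cycle_def)
    show "?n = 3"
    proof (cases "x \<in> set cs \<and> y \<in> set cs")
      case False
      have eq: "adj E (cs ! i) (cs ! j) \<longleftrightarrow> adj ?E' (cs ! i) (cs ! j)" if "i < ?n" "j < ?n" for i j
      proof -
        have "cs ! i \<in> set cs" "cs ! j \<in> set cs" using that by auto
        then have "{cs ! i, cs ! j} \<noteq> {x, y}" using False by (auto simp: doubleton_eq_iff)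
        then show ?thesis by (simp add: adj_minus)
      qed
      have "is_induced_cycle V E cs"
        using H eq unfolding is_induced_cycle_def is_cycle_def
        by (metis mod_less_divisor not_numeral_le_zero not_gr_zero)
      then show ?thesis using ch by (simp add: chordal_def)
    next
      case True
      then obtain i where i: "i < ?n" "cs ! i = x" by (metis in_set_conv_nth)
      define cs2 where "cs2 = rotate i cs"
      have H2: "is_induced_cycle V ?E' cs2" using induced_cycle_rotate[OF H] by (simp add: cs2_def)
      have l2: "length cs2 = ?n" and s2: "set cs2 = set cs" by (auto simp: cs2_def)
      have c20: "cs2 ! 0 = x" unfolding cs2_def using i by (subst nth_rotate) auto
      define p where "p = tl cs2"
      have cs2p: "cs2 = x # p" using c20 l2 n3 unfolding p_def by (cases cs2) auto
      let ?m = "length p"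
      have m: "?m = ?n - 1" using cs2p l2 by (metis length_tl p_def)
      have m3: "?m \<ge> 2" using m n3 by simp
      have ipE': "ipath ?E' p" using ipath_of_cycle[of V ?E' x p] H2 cs2p by simp
      have dp: "distinct p" using ipE' by (simp add: ipath_def)
      have xp: "x \<notin> set p" using H2 cs2p by (auto simp: is_induced_cycle_def is_cycle_def)
      have pV: "set p \<subseteq> V" using csV s2 cs2p by auto
      have cyc: "\<And>k. k < Suc ?m \<Longrightarrow> adj ?E' ((x # p) ! k) ((x # p) ! ((k + 1) mod Suc ?m))"
        using H2 cs2p by (auto simp: is_induced_cycle_def is_cycle_def)
      have ind: "\<And>k l. k < Suc ?m \<Longrightarrow> l < Suc ?m \<Longrightarrow> adj ?E' ((x # p) ! k) ((x # p) ! l) \<Longrightarrow>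
                 l = (k + 1) mod Suc ?m \<or> k = (l + 1) mod Suc ?m"
        using H2 cs2p unfolding is_induced_cycle_def by (metis length_Cons)
      have first: "adj ?E' x (p ! 0)" using cyc[of 0] m3 by (cases p) auto
      have last: "adj ?E' x (p ! (?m - 1))"
      proof -
        have "adj ?E' ((x # p) ! ?m) ((x # p) ! ((?m + 1) mod Suc ?m))" using cyc[of ?m] by simp
        moreover have "(x # p) ! ?m = p ! (?m - 1)" using m3 by (cases ?m) auto
        ultimately show ?thesis by (simp add: adj_sym)
      qed
      have inner: "\<not> adj ?E' x (p ! k)" if k: "0 < k" "k < ?m - 1" for k
      proof
        assume a: "adj ?E' x (p ! k)"
        have "adj ?E' ((x # p) ! 0) ((x # p) ! Suc k)" using a by simp
        then have "Suc k = 1 mod Suc ?m \<or> 0 = (Suc k + 1) mod Suc ?m" using ind[of 0 "Suc k"] k by simp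
        then show False using k m3 by (cases "p = []") auto
      qed
      have nxy: "\<not> adj ?E' x y" by (simp add: adj_minus)
      have yp: "y \<in> set p" using True cs2p s2 xy(3) by auto
      then obtain j where j: "j < ?m" "p ! j = y" by (metis in_set_conv_nth)
      have j0: "j \<noteq> 0"
      proof
        assume "j = 0" then show False using j(2) first nxy by simp
      qed
      have jm: "j \<noteq> ?m - 1"
      proof
        assume "j = ?m - 1" then show False using j(2) last nxy by simp
      qed
      have nadjE: "\<not> adj E x (p ! k)" if k: "0 < k" "k < ?m - 1" "k \<noteq> j" for k
      proof
        assume "adj E x (p ! k)"
        moreover have "p ! k \<noteq> y" using k j dp nth_eq_iff_index_eq by fastforce
        moreover have "p ! k \<noteq> x" using xp k nth_mem by fastforce
        ultimately have "adj ?E' x (p ! k)" by (auto simp: adj_minus doubleton_eq_iff)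
        then show False using inner k by blast
      qed
      have aE: "\<And>a b. adj ?E' a b \<Longrightarrow> adj E a b" by (simp add: adj_minus)
      define q1 where "q1 = take (Suc j) p"
      have "ipath ?E' q1" unfolding q1_def by (rule ipath_take[OF ipE'])
      moreover have "x \<notin> set q1" using xp by (auto simp: q1_def dest: in_set_takeD)
      ultimately have q1: "ipath E q1" by (rule ipath_lift)
      have lq1: "length q1 = Suc j" using j by (simp add: q1_def)
      have "is_induced_cycle V E (x # q1)"
      proof (rule cycle_of_ipath[OF G q1])
        show "2 \<le> length q1" using lq1 j0 by simp
        show "x \<notin> set q1" using xp by (auto simp: q1_def dest: in_set_takeD)
        show "x \<in> V" by (fact xyV(1))
        show "set q1 \<subseteq> V" using pV by (auto simp: q1_def dest: in_set_takeD)
        show "adj E x (q1 ! 0)" using first aE j0 by (simp add: q1_def)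
        show "adj E x (q1 ! (length q1 - 1))" using lq1 j xy(2) by (simp add: q1_def)
        fix k assume "0 < k" "k < length q1 - 1"
        then show "\<not> adj E x (q1 ! k)" using nadjE[of k] lq1 jm j by (simp add: q1_def)
      qed
      then have j1: "j = 1" using ch lq1 unfolding chordal_def by fastforce
      define q2 where "q2 = drop j p"
      have "ipath ?E' q2" unfolding q2_def by (rule ipath_drop[OF ipE'])
      moreover have "x \<notin> set q2" using xp by (auto simp: q2_def dest: in_set_dropD)
      ultimately have q2: "ipath E q2" by (rule ipath_lift)
      have lq2: "length q2 = ?m - j" by (simp add: q2_def)
      have "is_induced_cycle V E (x # q2)"
      proof (rule cycle_of_ipath[OF G q2])
        show "2 \<le> length q2" using lq2 j jm by simp
        show "x \<notin> set q2" using xp by (auto simp: q2_def dest: in_set_dropD)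
        show "x \<in> V" by (fact xyV(1))
        show "set q2 \<subseteq> V" using pV by (auto simp: q2_def dest: in_set_dropD)
        show "adj E x (q2 ! 0)" using j xy(2) by (simp add: q2_def)
        show "adj E x (q2 ! (length q2 - 1))" using last aE lq2 j jm by (simp add: q2_def)
        fix k assume "0 < k" "k < length q2 - 1"
        then show "\<not> adj E x (q2 ! k)" using nadjE[of "j + k"] lq2 jm j by (simp add: q2_def)
      qed
      then have m3': "?m = 3" using ch lq2 j1 unfolding chordal_def by fastforce
      \<comment> \<open>the 4-cycle x p0 y p2\<close>
      have wp: "\<And>k. Suc k < ?m \<Longrightarrow> adj ?E' (p ! k) (p ! Suc k)" using ipE' by (simp add: ipath_def walk_nth)
      have c0: "p ! 0 \<in> cn E x y"
        using first wp[of 0] j j1 m3' by (auto simp: cn_def adj_minus adj_sym)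
      have c2: "p ! 2 \<in> cn E x y"
        using last wp[of 1] j j1 m3' by (auto simp: cn_def adj_minus adj_sym numeral_2_eq_2)
      have ne02: "p ! 0 \<noteq> p ! 2" using dp m3' nth_eq_iff_index_eq by fastforce
      have "adj E (p ! 0) (p ! 2)" using cl[OF c0 c2 ne02] .
      moreover have "p ! 0 \<noteq> x" using xp m3' nth_mem by fastforce
      moreover have "p ! 2 \<noteq> x" using xp m3' nth_mem by fastforce
      ultimately have "adj ?E' (p ! 0) (p ! 2)" by (auto simp: adj_minus doubleton_eq_iff)
      moreover have "\<forall>i<?m. \<forall>j<?m. adj ?E' (p ! i) (p ! j) \<longrightarrow> j = Suc i \<or> i = Suc j"
        using ipE' by (simp add: ipath_def)
      moreover have "0 < ?m" "2 < ?m" using m3' by auto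
      ultimately have "(2::nat) = Suc 0 \<or> (0::nat) = Suc 2" by blast
      then have False by simp
      then show ?thesis ..
    qed
  qed
qed



definition valid2 :: "'a set \<Rightarrow> 'a set set \<Rightarrow> 'a set \<Rightarrow> bool" where
  "valid2 V E U \<longleftrightarrow> U \<subseteq> V \<and> (\<forall>u\<in>U. \<exists>a b. a \<noteq> b \<and> a \<in> U \<and> b \<in> U \<and> adj E u a \<and> adj E u b)"

lemma cycle_valid2:
  assumes "is_cycle V E cs"
  shows "valid2 V E (set cs)"
  unfolding valid2_def
proof (intro conjI ballI)
  show "set cs \<subseteq> V" using assms by (simp add: is_cycle_def)
  fix u assume "u \<in> set cs"
  then obtain i where i: "i < length cs" "cs ! i = u" by (metis in_set_conv_nth)
  define c2 where "c2 = rotate i cs"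
  have c2: "is_cycle V E c2" using cycle_rotate[OF assms] by (simp add: c2_def)
  let ?n = "length c2"
  have n: "?n \<ge> 3" "distinct c2" using c2 by (auto simp: is_cycle_def)
  have l: "?n = length cs" by (simp add: c2_def)
  have u0: "c2 ! 0 = u" unfolding c2_def using i by (subst nth_rotate) auto
  have cyc: "\<And>k. k < ?n \<Longrightarrow> adj E (c2 ! k) (c2 ! ((k + 1) mod ?n))" using c2 by (simp add: is_cycle_def)
  have m1: "(0 + 1) mod ?n = 1" using n by simp
  have a1: "adj E u (c2 ! 1)" using cyc[of 0] n m1 u0 by (cases c2) auto
  have "?n - 1 + 1 = ?n" using n by simp
  then have m2: "(?n - 1 + 1) mod ?n = 0" by simp
  have a2: "adj E u (c2 ! (?n - 1))" using cyc[of "?n - 1"] n m2 u0 by (simp add: adj_sym)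
  have ne: "c2 ! 1 \<noteq> c2 ! (?n - 1)" using n nth_eq_iff_index_eq[OF n(2), of 1 "?n - 1"] by simp
  have "c2 ! 1 \<in> set c2" "c2 ! (?n - 1) \<in> set c2" using n by auto
  then have "c2 ! 1 \<in> set cs" "c2 ! (?n - 1) \<in> set cs" by (auto simp: c2_def)
  then show "\<exists>a b. a \<noteq> b \<and> a \<in> set cs \<and> b \<in> set cs \<and> adj E u a \<and> adj E u b"
    using a1 a2 ne by blast
qed

lemma exists_exposed:
  assumes G: "simple_graph V E" and ch: "chordal V E" and cy: "is_cycle V E cs"
  shows "\<exists>e. exposed_edge V E e"
proof -
  have finV: "finite V" using G by (simp add: simple_graph_def)
  let ?F = "{U. valid2 V E U}"
  have fF: "finite ?F" using finV
    by (rule finite_subset[rotated, OF finite_Pow_iff[THEN iffD2]]) (auto simp: valid2_def)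
  have "set cs \<in> ?F" using cycle_valid2[OF cy] by simp
  then obtain W where W: "W \<in> ?F" and mx: "\<forall>U\<in>?F. card U \<le> card W"
    using finite_max_card[OF fF, of "set cs" card] by blast
  have vW: "valid2 V E W" using W by simp
  have WV: "W \<subseteq> V" using vW by (simp add: valid2_def)
  have finW: "finite W" using WV finV by (rule finite_subset)
  have outside: False if z: "z \<in> V" "z \<notin> W" "a \<noteq> b" "a \<in> W" "b \<in> W" "adj E z a" "adj E z b" for z a b
  proof -
    have "valid2 V E (insert z W)"
      unfolding valid2_def
    proof (intro conjI ballI)
      show "insert z W \<subseteq> V" using z WV by auto
      fix u assume "u \<in> insert z W"
      then show "\<exists>a b. a \<noteq> b \<and> a \<in> insert z W \<and> b \<in> insert z W \<and> adj E u a \<and> adj E u b"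
      proof
        assume "u = z" then show ?thesis using z by blast
      next
        assume "u \<in> W" then show ?thesis using vW unfolding valid2_def by blast
      qed
    qed
    then have "card (insert z W) \<le> card W" using mx by simp
    then show False using z finW by simp
  qed
  have Wne: "W \<noteq> {}"
  proof
    assume "W = {}"
    then have "card (set cs) \<le> 0" using mx \<open>set cs \<in> ?F\<close> by fastforce
    then show False using cy by (auto simp: is_cycle_def)
  qed
  have GW: "simple_graph W (restr E W)" by (rule simple_restr[OF G WV])
  have chW: "chordal W (restr E W)" by (rule chordal_restr[OF ch WV])
  obtain u where u: "u \<in> W" "simplicial (restr E W) u" using dirac[OF GW chW Wne] by blast
  obtain a b where ab: "a \<noteq> b" "a \<in> W" "b \<in> W" "adj E u a" "adj E u b" using vW u unfolding valid2_def by blast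
  have sim: "adj E c d" if cd: "c \<in> W" "d \<in> W" "adj E u c" "adj E u d" "c \<noteq> d" for c d
  proof -
    have "adj (restr E W) c d" using u cd unfolding simplicial_def adj_restr by blast
    then show ?thesis by (simp add: adj_restr)
  qed
  have ua: "u \<noteq> a" using ab adj_irrefl[OF G] by auto
  have cnW: "c \<in> W" if "c \<in> cn E u a" for c
  proof (rule ccontr)
    assume "c \<notin> W"
    moreover have "c \<in> V" "adj E c u" "adj E c a" using that adj_V[OF G] by (auto simp: cn_def adj_sym)
    ultimately show False using outside[of c u a] u ab ua by blast
  qed
  have "exposed_edge V E {u, a}"
  proof (rule exposed_of_cn[OF G ab(4)])
    have "adj E a b" using sim ab by blast
    then have "b \<in> cn E u a" using ab by (simp add: cn_def)
    then show "cn E u a \<noteq> {}" by blast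
  next
    fix c d assume cd: "c \<in> cn E u a" "d \<in> cn E u a" "c \<noteq> d"
    have "c \<in> W" "d \<in> W" using cnW cd by auto
    moreover have "adj E u c" "adj E u d" using cd by (auto simp: cn_def)
    ultimately show "adj E c d" using sim cd(3) by blast
  qed
  then show ?thesis by blast
qed

theorem proposition2p10:
  fixes V :: "'a set" and E :: "'a set set"
  assumes "simple_graph V E" and "connected_graph V E" and "chordal V E"
  shows "\<exists>E'. (erasure V)\<^sup>*\<^sup>* E E' \<and> is_tree V E'"
  using assms
proof (induction "card E" arbitrary: E rule: less_induct)
  case less
  note G = less.prems(1) and c = less.prems(2) and ch = less.prems(3)
  have finE: "finite E"
  proof -
    have "E \<subseteq> Pow V" using G by (auto simp: simple_graph_def)
    moreover have "finite V" using G by (simp add: simple_graph_def)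
    ultimately show ?thesis by (meson finite_Pow_iff finite_subset)
  qed
  show ?case
  proof (cases "acyclic_graph V E")
    case True
    then show ?thesis using c by (auto simp: is_tree_def)
  next
    case False
    then obtain cs where "is_cycle V E cs" by (auto simp: acyclic_graph_def)
    then obtain e where ex: "exposed_edge V E e" using exists_exposed[OF G ch] by blast
    have eE: "e \<in> E" using ex by (simp add: exposed_edge_def)
    have G1: "simple_graph V (E - {e})" using simple_minus[OF G] .
    have c1: "connected_graph V (E - {e})" using remove_connected[OF G c ex] .
    have ch1: "chordal V (E - {e})" using remove_chordal[OF G ch ex] .
    have "card (E - {e}) < card E" using finE eE by (rule card_Diff1_less)
    then obtain E' where E': "(erasure V)\<^sup>*\<^sup>* (E - {e}) E'" "is_tree V E'"
      using less.hyps G1 c1 ch1 by blast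
    have "erasure V E (E - {e})" using ex by (auto simp: erasure_def)
    then have "(erasure V)\<^sup>*\<^sup>* E E'" using E'(1) by (rule converse_rtranclp_into_rtranclp)
    then show ?thesis using E'(2) by blast
  qed
qed

end
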